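(* Let $S$ be a solid and let $P=\{x\in S: e(x)=0\}$ be the set of precise elements. Then $P$, with the restrictions of $+$, $\cdot$ and $\le$, is an ordered field with zero $0$ and unit $1$.
   Context: A solid is a set $S$ with two binary operations $+$ and $\cdot$ (written $xy$) and a binary relation $\le$ satisfying the following axioms (all variables range over $S$). (A1) $+$ is associative and commutative. (A2) For each $x$ there is $e$ with $x+e=x$ such that $e+f=e$ for every $f$ with $x+f=x$; this $e$ is unique and is denoted $e(x)$ (the magnitude of $x$). An element $x$ with $x=e(x)$ is called a magnitude. (A3) For each $x$ there is $s$ with $x+s=e(x)$ and $e(s)=e(x)$; it is unique and denoted $-x$; write $x-y$ for $x+(-y)$. (A4) $e(x+y)=e(x)$ or $e(x+y)=e(y)$. (M1) $\cdot$ is associative and commutative. (M2) For each $x\neq e(x)$ there is $u$ with $xu=x$ such that $uv=u$ for every $v$ with $xv=x$; it is unique and denoted $u(x)$. (M3) For each $x\ne e(x)$ there is $d$ with $xd=u(x)$ and $u(d)=u(x)$; it is unique and denoted $x^{-1}$; write $y/x$ for $yx^{-1}$. (M4) If $x\neq e(x)$ and $y\ne e(y)$ then $u(xy)=u(x)$ or $u(xy)=u(y)$. (O1) $\le$ is a total order (reflexive, antisymmetric, transitive, total); $x<y$ means $x\le y$ and $x\ne y$. (O2) $x\le y\Rightarrow x+z\le y+z$. (O3) $y+e(x)=e(x)\Rightarrow (y\le e(x)$ and $-y\le e(x))$. (O4) $(e(x)<x$ and $y\le z)\Rightarrow xy\le xz$. (O5) $e(y)\le y\le z\Rightarrow e(x)y\le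 e(x)z$. (AM1) For all $x,y$ there is $z$ with $e(x)y=e(z)$. (AM2) $e(xy)=e(x)y+e(y)x$. (AM3) If $x\ne e(x)$ then $e(u(x))=e(x)/x$. (AM4) (distributivity axiom) $xy+xz=x(y+z)+e(x)y+e(x)z$. (AM5) $-(xy)=(-x)y$. (E1) There is $m$ with $m+x=x$ for all $x$; it is unique, called zero and denoted $0$. (E2) There is $u$ with $ux=x$ for all $x$; it is unique, called one and denoted $1$. (E3) There is $M$ with $e(x)+M=M$ for all $x$. (E4) There is $x$ with $e(x)\ne 0$ and $e(x)\ne M$. (E5) For every $x$ there is $a$ with $x=a+e(x)$ and $e(a)=0$. (E6) If $x,y$ are magnitudes with $x<y$, there is $z$ with $z\ne e(z)$ and $x<z<y$. Further notation: $S^*=\{x\in S: x\ne e(x)\}$ (zeroless elements). $x$ is positive if $e(x)\le x$ and negative if $x<e(x)$; $|x|=x$ if $x$ is positive and $|x|=-x$ if $x$ is negative. $x$ is precise if $e(x)=0$. The relative uncertainty $R(x)$ is $e(u(x))$ if $x\ne e(x)$, and $M$ (from (E3)) if $x=e(x)$. *)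

theory Defs
  imports "HOL-Algebra.Ring" "HOL-Algebra.Ring_Divisibility"
begin

text \<open>A solid: the carrier is the whole type 'a; pl is +, ti is multiplication (written xy),
  leq is the order relation.\<close>

definition mag :: "('a \<Rightarrow> 'a \<Rightarrow> 'a) \<Rightarrow> 'a \<Rightarrow> 'a" where
  "mag pl x = (THE e. pl x e = x \<and> (\<forall>f. pl x f = x \<longrightarrow> pl e f = e))"

definition sneg :: "('a \<Rightarrow> 'a \<Rightarrow> 'a) \<Rightarrow> 'a \<Rightarrow> 'a" where
  "sneg pl x = (THE s. pl x s = mag pl x \<and> mag pl s = mag pl x)"

definition sunit :: "('a \<Rightarrow> 'a \<Rightarrow> 'a) \<Rightarrow> ('a \<Rightarrow> 'a \<Rightarrow> 'a) \<Rightarrow> 'a \<Rightarrow> 'a" where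
  "sunit pl ti x = (THE u. ti x u = x \<and> (\<forall>v. ti x v = x \<longrightarrow> ti u v = u))"

definition sinv :: "('a \<Rightarrow> 'a \<Rightarrow> 'a) \<Rightarrow> ('a \<Rightarrow> 'a \<Rightarrow> 'a) \<Rightarrow> 'a \<Rightarrow> 'a" where
  "sinv pl ti x = (THE d. ti x d = sunit pl ti x \<and> sunit pl ti d = sunit pl ti x)"

definition szero :: "('a \<Rightarrow> 'a \<Rightarrow> 'a) \<Rightarrow> 'a" where
  "szero pl = (THE m. \<forall>x. pl m x = x)"

definition sone :: "('a \<Rightarrow> 'a \<Rightarrow> 'a) \<Rightarrow> 'a" where
  "sone ti = (THE u. \<forall>x. ti u x = x)"

definition sbigM :: "('a \<Rightarrow> 'a \<Rightarrow> 'a) \<Rightarrow> 'a" where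
  "sbigM pl = (SOME M. \<forall>x. pl (mag pl x) M = M)"

definition solid :: "('a \<Rightarrow> 'a \<Rightarrow> 'a) \<Rightarrow> ('a \<Rightarrow> 'a \<Rightarrow> 'a) \<Rightarrow> ('a \<Rightarrow> 'a \<Rightarrow> bool) \<Rightarrow> bool" where
  "solid pl ti leq \<longleftrightarrow>
    \<comment> \<open>(A1)\<close>
    (\<forall>x y z. pl (pl x y) z = pl x (pl y z)) \<and> (\<forall>x y. pl x y = pl y x) \<and>
    \<comment> \<open>(A2)\<close>
    (\<forall>x. \<exists>!e. pl x e = x \<and> (\<forall>f. pl x f = x \<longrightarrow> pl e f = e)) \<and>
    \<comment> \<open>(A3)\<close>
    (\<forall>x. \<exists>!s. pl x s = mag pl x \<and> mag pl s = mag pl x) \<and>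
    \<comment> \<open>(A4)\<close>
    (\<forall>x y. mag pl (pl x y) = mag pl x \<or> mag pl (pl x y) = mag pl y) \<and>
    \<comment> \<open>(M1)\<close>
    (\<forall>x y z. ti (ti x y) z = ti x (ti y z)) \<and> (\<forall>x y. ti x y = ti y x) \<and>
    \<comment> \<open>(M2)\<close>
    (\<forall>x. x \<noteq> mag pl x \<longrightarrow> (\<exists>!u. ti x u = x \<and> (\<forall>v. ti x v = x \<longrightarrow> ti u v = u))) \<and>
    \<comment> \<open>(M3)\<close>
    (\<forall>x. x \<noteq> mag pl x \<longrightarrow> (\<exists>!d. ti x d = sunit pl ti x \<and> sunit pl ti d = sunit pl ti x)) \<and>
    \<comment> \<open>(M4)\<close>
    (\<forall>x y. x \<noteq> mag pl x \<and> y \<noteq> mag pl y \<longrightarrow>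
       sunit pl ti (ti x y) = sunit pl ti x \<or> sunit pl ti (ti x y) = sunit pl ti y) \<and>
    \<comment> \<open>(O1)\<close>
    (\<forall>x. leq x x) \<and> (\<forall>x y. leq x y \<and> leq y x \<longrightarrow> x = y) \<and>
    (\<forall>x y z. leq x y \<and> leq y z \<longrightarrow> leq x z) \<and> (\<forall>x y. leq x y \<or> leq y x) \<and>
    \<comment> \<open>(O2)\<close>
    (\<forall>x y z. leq x y \<longrightarrow> leq (pl x z) (pl y z)) \<and>
    \<comment> \<open>(O3)\<close>
    (\<forall>x y. pl y (mag pl x) = mag pl x \<longrightarrow> leq y (mag pl x) \<and> leq (sneg pl y) (mag pl x)) \<and>
    \<comment> \<open>(O4)\<close>
    (\<forall>x y z. (leq (mag pl x) x \<and> mag pl x \<noteq> x) \<and> leq y z \<longrightarrow> leq (ti x y) (ti x z)) \<and>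
    \<comment> \<open>(O5)\<close>
    (\<forall>x y z. leq (mag pl y) y \<and> leq y z \<longrightarrow> leq (ti (mag pl x) y) (ti (mag pl x) z)) \<and>
    \<comment> \<open>(AM1)\<close>
    (\<forall>x y. \<exists>z. ti (mag pl x) y = mag pl z) \<and>
    \<comment> \<open>(AM2)\<close>
    (\<forall>x y. mag pl (ti x y) = pl (ti (mag pl x) y) (ti (mag pl y) x)) \<and>
    \<comment> \<open>(AM3)\<close>
    (\<forall>x. x \<noteq> mag pl x \<longrightarrow> mag pl (sunit pl ti x) = ti (mag pl x) (sinv pl ti x)) \<and>
    \<comment> \<open>(AM4)\<close>
    (\<forall>x y z. pl (ti x y) (ti x z) =
        pl (pl (ti x (pl y z)) (ti (mag pl x) y)) (ti (mag pl x) z)) \<and>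
    \<comment> \<open>(AM5)\<close>
    (\<forall>x y. sneg pl (ti x y) = ti (sneg pl x) y) \<and>
    \<comment> \<open>(E1)\<close>
    (\<exists>m. \<forall>x. pl m x = x) \<and>
    \<comment> \<open>(E2)\<close>
    (\<exists>u. \<forall>x. ti u x = x) \<and>
    \<comment> \<open>(E3)\<close>
    (\<exists>M. \<forall>x. pl (mag pl x) M = M) \<and>
    \<comment> \<open>(E4)\<close>
    (\<exists>x. mag pl x \<noteq> szero pl \<and> mag pl x \<noteq> sbigM pl) \<and>
    \<comment> \<open>(E5)\<close>
    (\<forall>x. \<exists>a. x = pl a (mag pl x) \<and> mag pl a = szero pl) \<and>
    \<comment> \<open>(E6)\<close>
    (\<forall>x y. x = mag pl x \<and> y = mag pl y \<and> leq x y \<and> x \<noteq> y \<longrightarrow>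
       (\<exists>z. z \<noteq> mag pl z \<and> leq x z \<and> x \<noteq> z \<and> leq z y \<and> z \<noteq> y))"

definition ordered_field_on ::
  "'a set \<Rightarrow> ('a \<Rightarrow> 'a \<Rightarrow> 'a) \<Rightarrow> ('a \<Rightarrow> 'a \<Rightarrow> 'a) \<Rightarrow> ('a \<Rightarrow> 'a \<Rightarrow> bool) \<Rightarrow> 'a \<Rightarrow> 'a \<Rightarrow> bool" where
  "ordered_field_on P pl ti leq z u \<longleftrightarrow>
    field \<lparr>carrier = P, mult = ti, one = u, zero = z, add = pl\<rparr> \<and>
    (\<forall>x\<in>P. leq x x) \<and> (\<forall>x\<in>P. \<forall>y\<in>P. leq x y \<and> leq y x \<longrightarrow> x = y) \<and>
    (\<forall>x\<in>P. \<forall>y\<in>P. \<forall>w\<in>P. leq x y \<and> leq y w \<longrightarrow> leq x w) \<and>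
    (\<forall>x\<in>P. \<forall>y\<in>P. leq x y \<or> leq y x) \<and>
    (\<forall>x\<in>P. \<forall>y\<in>P. \<forall>w\<in>P. leq x y \<longrightarrow> leq (pl x w) (pl y w)) \<and>
    (\<forall>x\<in>P. \<forall>y\<in>P. leq z x \<and> leq z y \<longrightarrow> leq z (ti x y))"

end

theory Submission
  imports Defs
begin

locale sol =
  fixes pl ti :: "'a \<Rightarrow> 'a \<Rightarrow> 'a" and leq :: "'a \<Rightarrow> 'a \<Rightarrow> bool"
  assumes solid: "solid pl ti leq"
begin

abbreviation "e \<equiv> mag pl"
abbreviation "ng \<equiv> sneg pl"
abbreviation "Z \<equiv> szero pl"
abbreviation "I1 \<equiv> sone ti"
abbreviation "un \<equiv> sunit pl ti"
abbreviation "iv \<equiv> sinv pl ti"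

lemma S: "(\<forall>x y z. pl (pl x y) z = pl x (pl y z)) \<and> (\<forall>x y. pl x y = pl y x) \<and>
    (\<forall>x. \<exists>!e. pl x e = x \<and> (\<forall>f. pl x f = x \<longrightarrow> pl e f = e)) \<and>
    (\<forall>x. \<exists>!s. pl x s = mag pl x \<and> mag pl s = mag pl x) \<and>
    (\<forall>x y. mag pl (pl x y) = mag pl x \<or> mag pl (pl x y) = mag pl y) \<and>
    (\<forall>x y z. ti (ti x y) z = ti x (ti y z)) \<and> (\<forall>x y. ti x y = ti y x) \<and>
    (\<forall>x. x \<noteq> mag pl x \<longrightarrow> (\<exists>!u. ti x u = x \<and> (\<forall>v. ti x v = x \<longrightarrow> ti u v = u))) \<and>
    (\<forall>x. x \<noteq> mag pl x \<longrightarrow> (\<exists>!d. ti x d = sunit pl ti x \<and> sunit pl ti d = sunit pl ti x)) \<and>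
    (\<forall>x y. x \<noteq> mag pl x \<and> y \<noteq> mag pl y \<longrightarrow>
       sunit pl ti (ti x y) = sunit pl ti x \<or> sunit pl ti (ti x y) = sunit pl ti y) \<and>
    (\<forall>x. leq x x) \<and> (\<forall>x y. leq x y \<and> leq y x \<longrightarrow> x = y) \<and>
    (\<forall>x y z. leq x y \<and> leq y z \<longrightarrow> leq x z) \<and> (\<forall>x y. leq x y \<or> leq y x) \<and>
    (\<forall>x y z. leq x y \<longrightarrow> leq (pl x z) (pl y z)) \<and>
    (\<forall>x y. pl y (mag pl x) = mag pl x \<longrightarrow> leq y (mag pl x) \<and> leq (sneg pl y) (mag pl x)) \<and>
    (\<forall>x y z. (leq (mag pl x) x \<and> mag pl x \<noteq> x) \<and> leq y z \<longrightarrow> leq (ti x y) (ti x z)) \<and>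
    (\<forall>x y z. leq (mag pl y) y \<and> leq y z \<longrightarrow> leq (ti (mag pl x) y) (ti (mag pl x) z)) \<and>
    (\<forall>x y. \<exists>z. ti (mag pl x) y = mag pl z) \<and>
    (\<forall>x y. mag pl (ti x y) = pl (ti (mag pl x) y) (ti (mag pl y) x)) \<and>
    (\<forall>x. x \<noteq> mag pl x \<longrightarrow> mag pl (sunit pl ti x) = ti (mag pl x) (sinv pl ti x)) \<and>
    (\<forall>x y z. pl (ti x y) (ti x z) =
        pl (pl (ti x (pl y z)) (ti (mag pl x) y)) (ti (mag pl x) z)) \<and>
    (\<forall>x y. sneg pl (ti x y) = ti (sneg pl x) y) \<and>
    (\<exists>m. \<forall>x. pl m x = x) \<and>
    (\<exists>u. \<forall>x. ti u x = x) \<and>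
    (\<exists>M. \<forall>x. pl (mag pl x) M = M) \<and>
    (\<exists>x. mag pl x \<noteq> szero pl \<and> mag pl x \<noteq> sbigM pl) \<and>
    (\<forall>x. \<exists>a. x = pl a (mag pl x) \<and> mag pl a = szero pl) \<and>
    (\<forall>x y. x = mag pl x \<and> y = mag pl y \<and> leq x y \<and> x \<noteq> y \<longrightarrow>
       (\<exists>z. z \<noteq> mag pl z \<and> leq x z \<and> x \<noteq> z \<and> leq z y \<and> z \<noteq> y))"
  using solid unfolding solid_def .

lemma passoc: "pl (pl x y) z = pl x (pl y z)" using S[THEN conjunct1] by blast
lemma pcomm: "pl x y = pl y x" using S[THEN conjunct2, THEN conjunct1] by blast
lemma A2: "\<exists>!e. pl x e = x \<and> (\<forall>f. pl x f = x \<longrightarrow> pl e f = e)" using S[THEN conjunct2, THEN conjunct2, THEN conjunct1] by blast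
lemma A3: "\<exists>!s. pl x s = e x \<and> e s = e x" using S[THEN conjunct2, THEN conjunct2, THEN conjunct2, THEN conjunct1] by blast
lemma A4: "e (pl x y) = e x \<or> e (pl x y) = e y" using S[THEN conjunct2, THEN conjunct2, THEN conjunct2, THEN conjunct2, THEN conjunct1] by blast
lemma tassoc: "ti (ti x y) z = ti x (ti y z)" using S[THEN conjunct2, THEN conjunct2, THEN conjunct2, THEN conjunct2, THEN conjunct2, THEN conjunct1] by blast
lemma tcomm: "ti x y = ti y x" using S[THEN conjunct2, THEN conjunct2, THEN conjunct2, THEN conjunct2, THEN conjunct2, THEN conjunct2, THEN conjunct1] by blast
lemma M2: "x \<noteq> e x \<Longrightarrow> \<exists>!u. ti x u = x \<and> (\<forall>v. ti x v = x \<longrightarrow> ti u v = u)" using S[THEN conjunct2, THEN conjunct2, THEN conjunct2, THEN conjunct2, THEN conjunct2, THEN conjunct2, THEN conjunct2, THEN conjunct1] by blast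
lemma M3: "x \<noteq> e x \<Longrightarrow> \<exists>!d. ti x d = un x \<and> un d = un x" using S[THEN conjunct2, THEN conjunct2, THEN conjunct2, THEN conjunct2, THEN conjunct2, THEN conjunct2, THEN conjunct2, THEN conjunct2, THEN conjunct1] by blast
lemma M4: "x \<noteq> e x \<Longrightarrow> y \<noteq> e y \<Longrightarrow> un (ti x y) = un x \<or> un (ti x y) = un y" using S[THEN conjunct2, THEN conjunct2, THEN conjunct2, THEN conjunct2, THEN conjunct2, THEN conjunct2, THEN conjunct2, THEN conjunct2, THEN conjunct2, THEN conjunct1] by blast
lemma refl: "leq x x" using S[THEN conjunct2, THEN conjunct2, THEN conjunct2, THEN conjunct2, THEN conjunct2, THEN conjunct2, THEN conjunct2, THEN conjunct2, THEN conjunct2, THEN conjunct2, THEN conjunct1] by blast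
lemma antisym: "leq x y \<Longrightarrow> leq y x \<Longrightarrow> x = y" using S[THEN conjunct2, THEN conjunct2, THEN conjunct2, THEN conjunct2, THEN conjunct2, THEN conjunct2, THEN conjunct2, THEN conjunct2, THEN conjunct2, THEN conjunct2, THEN conjunct2, THEN conjunct1] by blast
lemma total: "leq x y \<or> leq y x" using S[THEN conjunct2, THEN conjunct2, THEN conjunct2, THEN conjunct2, THEN conjunct2, THEN conjunct2, THEN conjunct2, THEN conjunct2, THEN conjunct2, THEN conjunct2, THEN conjunct2, THEN conjunct2, THEN conjunct2, THEN conjunct1] by blast
lemma trans: "leq x y \<Longrightarrow> leq y z \<Longrightarrow> leq x z" using S[THEN conjunct2, THEN conjunct2, THEN conjunct2, THEN conjunct2, THEN conjunct2, THEN conjunct2, THEN conjunct2, THEN conjunct2, THEN conjunct2, THEN conjunct2, THEN conjunct2, THEN conjunct2, THEN conjunct1] by blast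
lemma O2: "leq x y \<Longrightarrow> leq (pl x z) (pl y z)" using S[THEN conjunct2, THEN conjunct2, THEN conjunct2, THEN conjunct2, THEN conjunct2, THEN conjunct2, THEN conjunct2, THEN conjunct2, THEN conjunct2, THEN conjunct2, THEN conjunct2, THEN conjunct2, THEN conjunct2, THEN conjunct2, THEN conjunct1] by blast
lemma O3: "pl y (e x) = e x \<Longrightarrow> leq y (e x)" using S[THEN conjunct2, THEN conjunct2, THEN conjunct2, THEN conjunct2, THEN conjunct2, THEN conjunct2, THEN conjunct2, THEN conjunct2, THEN conjunct2, THEN conjunct2, THEN conjunct2, THEN conjunct2, THEN conjunct2, THEN conjunct2, THEN conjunct2, THEN conjunct1] by blast
lemma O4: "leq (e x) x \<Longrightarrow> e x \<noteq> x \<Longrightarrow> leq y z \<Longrightarrow> leq (ti x y) (ti x z)" using S[THEN conjunct2, THEN conjunct2, THEN conjunct2, THEN conjunct2, THEN conjunct2, THEN conjunct2, THEN conjunct2, THEN conjunct2, THEN conjunct2, THEN conjunct2, THEN conjunct2, THEN conjunct2, THEN conjunct2, THEN conjunct2, THEN conjunct2, THEN conjunct2, THEN conjunct1] by blast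
lemma O5: "leq (e y) y \<Longrightarrow> leq y z \<Longrightarrow> leq (ti (e x) y) (ti (e x) z)" using S[THEN conjunct2, THEN conjunct2, THEN conjunct2, THEN conjunct2, THEN conjunct2, THEN conjunct2, THEN conjunct2, THEN conjunct2, THEN conjunct2, THEN conjunct2, THEN conjunct2, THEN conjunct2, THEN conjunct2, THEN conjunct2, THEN conjunct2, THEN conjunct2, THEN conjunct2, THEN conjunct1] by blast
lemma AM1: "\<exists>z. ti (e x) y = e z" using S[THEN conjunct2, THEN conjunct2, THEN conjunct2, THEN conjunct2, THEN conjunct2, THEN conjunct2, THEN conjunct2, THEN conjunct2, THEN conjunct2, THEN conjunct2, THEN conjunct2, THEN conjunct2, THEN conjunct2, THEN conjunct2, THEN conjunct2, THEN conjunct2, THEN conjunct2, THEN conjunct2, THEN conjunct1] by blast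
lemma AM2: "e (ti x y) = pl (ti (e x) y) (ti (e y) x)" using S[THEN conjunct2, THEN conjunct2, THEN conjunct2, THEN conjunct2, THEN conjunct2, THEN conjunct2, THEN conjunct2, THEN conjunct2, THEN conjunct2, THEN conjunct2, THEN conjunct2, THEN conjunct2, THEN conjunct2, THEN conjunct2, THEN conjunct2, THEN conjunct2, THEN conjunct2, THEN conjunct2, THEN conjunct2, THEN conjunct1] by blast
lemma AM3: "x \<noteq> e x \<Longrightarrow> e (un x) = ti (e x) (iv x)" using S[THEN conjunct2, THEN conjunct2, THEN conjunct2, THEN conjunct2, THEN conjunct2, THEN conjunct2, THEN conjunct2, THEN conjunct2, THEN conjunct2, THEN conjunct2, THEN conjunct2, THEN conjunct2, THEN conjunct2, THEN conjunct2, THEN conjunct2, THEN conjunct2, THEN conjunct2, THEN conjunct2, THEN conjunct2, THEN conjunct2, THEN conjunct1] by blast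
lemma AM4: "pl (ti x y) (ti x z) = pl (pl (ti x (pl y z)) (ti (e x) y)) (ti (e x) z)" using S[THEN conjunct2, THEN conjunct2, THEN conjunct2, THEN conjunct2, THEN conjunct2, THEN conjunct2, THEN conjunct2, THEN conjunct2, THEN conjunct2, THEN conjunct2, THEN conjunct2, THEN conjunct2, THEN conjunct2, THEN conjunct2, THEN conjunct2, THEN conjunct2, THEN conjunct2, THEN conjunct2, THEN conjunct2, THEN conjunct2, THEN conjunct2, THEN conjunct1] by blast
lemma AM5: "ng (ti x y) = ti (ng x) y" using S[THEN conjunct2, THEN conjunct2, THEN conjunct2, THEN conjunct2, THEN conjunct2, THEN conjunct2, THEN conjunct2, THEN conjunct2, THEN conjunct2, THEN conjunct2, THEN conjunct2, THEN conjunct2, THEN conjunct2, THEN conjunct2, THEN conjunct2, THEN conjunct2, THEN conjunct2, THEN conjunct2, THEN conjunct2, THEN conjunct2, THEN conjunct2, THEN conjunct2, THEN conjunct1] by blast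
lemma E1: "\<exists>m. \<forall>x. pl m x = x" using S[THEN conjunct2, THEN conjunct2, THEN conjunct2, THEN conjunct2, THEN conjunct2, THEN conjunct2, THEN conjunct2, THEN conjunct2, THEN conjunct2, THEN conjunct2, THEN conjunct2, THEN conjunct2, THEN conjunct2, THEN conjunct2, THEN conjunct2, THEN conjunct2, THEN conjunct2, THEN conjunct2, THEN conjunct2, THEN conjunct2, THEN conjunct2, THEN conjunct2, THEN conjunct2, THEN conjunct1] by blast
lemma E2: "\<exists>u. \<forall>x. ti u x = x" using S[THEN conjunct2, THEN conjunct2, THEN conjunct2, THEN conjunct2, THEN conjunct2, THEN conjunct2, THEN conjunct2, THEN conjunct2, THEN conjunct2, THEN conjunct2, THEN conjunct2, THEN conjunct2, THEN conjunct2, THEN conjunct2, THEN conjunct2, THEN conjunct2, THEN conjunct2, THEN conjunct2, THEN conjunct2, THEN conjunct2, THEN conjunct2, THEN conjunct2, THEN conjunct2, THEN conjunct2, THEN conjunct1] by blast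
lemma E4: "\<exists>x. e x \<noteq> Z \<and> e x \<noteq> sbigM pl" using S[THEN conjunct2, THEN conjunct2, THEN conjunct2, THEN conjunct2, THEN conjunct2, THEN conjunct2, THEN conjunct2, THEN conjunct2, THEN conjunct2, THEN conjunct2, THEN conjunct2, THEN conjunct2, THEN conjunct2, THEN conjunct2, THEN conjunct2, THEN conjunct2, THEN conjunct2, THEN conjunct2, THEN conjunct2, THEN conjunct2, THEN conjunct2, THEN conjunct2, THEN conjunct2, THEN conjunct2, THEN conjunct2, THEN conjunct2, THEN conjunct1] by blast
lemma E5: "\<exists>a. x = pl a (e x) \<and> e a = Z" using S[THEN conjunct2, THEN conjunct2, THEN conjunct2, THEN conjunct2, THEN conjunct2, THEN conjunct2, THEN conjunct2, THEN conjunct2, THEN conjunct2, THEN conjunct2, THEN conjunct2, THEN conjunct2, THEN conjunct2, THEN conjunct2, THEN conjunct2, THEN conjunct2, THEN conjunct2, THEN conjunct2, THEN conjunct2, THEN conjunct2, THEN conjunct2, THEN conjunct2, THEN conjunct2, THEN conjunct2, THEN conjunct2, THEN conjunct2, THEN conjunct2, THEN conjunct1] by blast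
lemma E6: "x = e x \<Longrightarrow> y = e y \<Longrightarrow> leq x y \<Longrightarrow> x \<noteq> y \<Longrightarrow>
       (\<exists>z. z \<noteq> e z \<and> leq x z \<and> x \<noteq> z \<and> leq z y \<and> z \<noteq> y)" using S[THEN conjunct2, THEN conjunct2, THEN conjunct2, THEN conjunct2, THEN conjunct2, THEN conjunct2, THEN conjunct2, THEN conjunct2, THEN conjunct2, THEN conjunct2, THEN conjunct2, THEN conjunct2, THEN conjunct2, THEN conjunct2, THEN conjunct2, THEN conjunct2, THEN conjunct2, THEN conjunct2, THEN conjunct2, THEN conjunct2, THEN conjunct2, THEN conjunct2, THEN conjunct2, THEN conjunct2, THEN conjunct2, THEN conjunct2, THEN conjunct2, THEN conjunct2] by blast

lemma mag1: "pl x (e x) = x"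
  using theI'[OF A2[of x]] unfolding mag_def by blast
lemma mag2: "pl x f = x \<Longrightarrow> pl (e x) f = e x"
  using theI'[OF A2[of x]] unfolding mag_def by blast
lemma mag_idem: assumes "pl m m = m" shows "e m = m"
proof -
  have "pl m m = m \<and> (\<forall>f. pl m f = m \<longrightarrow> pl m f = m)" using assms by blast
  then show ?thesis using the1_equality[OF A2[of m]] unfolding mag_def by blast
qed
lemma ee: "e (e x) = e x"
  using mag2[OF mag1[of x]] mag_idem by blast
lemma magpp: "pl (e x) (e x) = e x"
  using mag2[OF mag1[of x]] .

lemma Zl: "pl Z x = x"
proof -
  obtain m where m: "\<forall>x. pl m x = x" using E1 by blast
  have "Z = m" unfolding szero_def
    by (rule the_equality, fact m, metis m pcomm)
  then show ?thesis using m by simp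
qed
lemma Zr: "pl x Z = x" using Zl pcomm by metis
lemma eZ: "e Z = Z" using mag_idem Zl by metis

lemma Il: "ti I1 x = x"
proof -
  obtain m where m: "\<forall>x. ti m x = x" using E2 by blast
  have "I1 = m" unfolding sone_def
    by (rule the_equality, fact m, metis m tcomm)
  then show ?thesis using m by simp
qed
lemma Ir: "ti x I1 = x" using Il tcomm by metis

lemma neg1: "pl x (ng x) = e x"
  using theI'[OF A3[of x]] unfolding sneg_def by blast
lemma neg2: "e (ng x) = e x"
  using theI'[OF A3[of x]] unfolding sneg_def by blast
lemma neg_mag: assumes "e m = m" shows "ng m = m"
proof -
  have "pl m m = e m \<and> e m = e m" using magpp[of m] assms by simp
  then show ?thesis using the1_equality[OF A3[of m]] unfolding sneg_def by blast
qed

lemma mag_ge0: "leq Z (e x)"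
  using O3[of Z x] Zl by blast

lemma am1: "e (ti (e x) y) = ti (e x) y"
  using AM1[of x y] ee by metis
lemma am1': "leq Z (ti (e x) y)"
  using AM1[of x y] mag_ge0 by metis

lemma sum0: assumes "e m = m" "e n = n" "pl m n = Z" shows "n = Z"
proof -
  have "pl n (pl m n) = pl m n" by (metis passoc pcomm magpp assms(2))
  then show ?thesis using assms(3) Zr by metis
qed

lemma pm: assumes "e q = Z" "e m = m" shows "e (pl q m) = m"
proof -
  have "pl (pl q m) m = pl q m" by (metis passoc magpp assms(2))
  then have h: "pl (e (pl q m)) m = e (pl q m)" by (rule mag2)
  show ?thesis using A4[of q m] assms h Zl by metis
qed

definition "aa = e I1"

lemma a0: "ti aa Z = Z"
proof -
  have "e (ti I1 Z) = pl (ti (e I1) Z) (ti (e Z) I1)" by (rule AM2)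
  then show ?thesis unfolding aa_def using Il Ir eZ Zr by metis
qed

lemma Z0: "ti Z Z = Z"
proof -
  have "leq (ti (e Z) Z) (ti (e Z) aa)"
    by (rule O5, simp add: eZ refl, unfold aa_def, rule mag_ge0)
  then have "leq (ti Z Z) Z" using eZ a0 tcomm by metis
  moreover have "leq Z (ti Z Z)" using am1'[of Z Z] eZ by metis
  ultimately show ?thesis using antisym by blast
qed

lemma F9: "pl y (ti aa y) = y"
proof -
  have "pl (ti I1 y) (ti I1 Z) = pl (pl (ti I1 (pl y Z)) (ti (e I1) y)) (ti (e I1) Z)" by (rule AM4)
  then show ?thesis unfolding aa_def[symmetric] using Il Zr a0 by metis
qed

lemma F9p: assumes "e y = Z" shows "ti aa y = Z"
  using mag2[OF F9[of y]] assms Zl by metis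

lemma F8pos: assumes "e y = Z" "leq Z y" shows "ti y Z = Z"
proof (cases "y = Z")
  case True then show ?thesis using Z0 by simp
next
  case False
  have "leq (ti y Z) (ti y aa)"
    by (rule O4, simp_all add: assms False[symmetric], unfold aa_def, rule mag_ge0)
  then have "leq (ti y Z) Z" using F9p[OF assms(1)] tcomm by metis
  moreover have "leq Z (ti y Z)" using am1'[of Z y] eZ tcomm by metis
  ultimately show ?thesis using antisym by blast
qed

lemma negp: "e x = Z \<Longrightarrow> pl x (ng x) = Z" using neg1 by simp
lemma negnz: "e x = Z \<Longrightarrow> e (ng x) = Z" using neg2 by simp

lemma F8: assumes "e y = Z" shows "ti Z y = Z"
proof (cases "leq Z y")
  case True then show ?thesis using F8pos[OF assms] tcomm by metis
next
  case False
  then have "leq y Z" using total by blast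
  then have "leq (pl y (ng y)) (pl Z (ng y))" by (rule O2)
  then have "leq Z (ng y)" using negp[OF assms] Zl by metis
  then have "ti (ng y) Z = Z" using F8pos negnz[OF assms] by blast
  then have "ng (ti y Z) = Z" using AM5 by metis
  moreover have "e (ti y Z) = ti y Z" using am1[of Z y] eZ tcomm by metis
  ultimately show ?thesis using neg_mag tcomm by metis
qed

lemma F10: "\<exists>p. e p = Z \<and> p \<noteq> Z"
proof -
  obtain x where x: "e x \<noteq> Z" using E4 by blast
  obtain z where z: "z \<noteq> e z" using E6[of Z "e x"] eZ ee mag_ge0 x by metis
  obtain p where p: "z = pl p (e z)" "e p = Z" using E5 by blast
  have "p \<noteq> Z" using p z Zl by metis
  then show ?thesis using p by blast
qed

lemma F11: "e I1 = Z"
proof -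
  obtain b where b: "I1 = pl b aa" "e b = Z" using E5[of I1] unfolding aa_def by blast
  have ea: "e aa = aa" unfolding aa_def by (rule ee)
  have "pl (ti aa b) (ti aa aa) = pl (pl (ti aa (pl b aa)) (ti (e aa) b)) (ti (e aa) aa)" by (rule AM4)
  then have "pl Z (ti aa aa) = pl (pl aa Z) (ti aa aa)"
    using b ea F9p[OF b(2)] Ir by metis
  then have h1: "pl aa (ti aa aa) = ti aa aa" using Zl Zr by metis
  have h2: "e (ti aa aa) = ti aa aa" unfolding aa_def by (rule am1)
  have laa: "leq aa (ti aa aa)" using O3[of aa "ti aa aa"] h1 h2 by metis
  have a0': "leq Z aa" unfolding aa_def by (rule mag_ge0)
  show ?thesis
  proof (cases "\<exists>z. e z = Z \<and> leq aa z")
    case True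
    then obtain z where z: "e z = Z" "leq aa z" by blast
    have "leq (ti (e I1) aa) (ti (e I1) z)" by (rule O5, simp add: ea refl, fact z(2))
    then have "leq (ti aa aa) Z" unfolding aa_def[symmetric] using F9p[OF z(1)] by metis
    then have "leq aa Z" using laa trans by blast
    then show ?thesis using a0' antisym unfolding aa_def by blast
  next
    case False
    then have all: "\<And>z. e z = Z \<Longrightarrow> leq z aa" using total by blast
    have "leq (pl b aa) (pl aa aa)" using O2 all[OF b(2)] by blast
    then have l1: "leq I1 aa" using b(1) magpp ea by metis
    have "leq (pl (ng b) I1) (pl aa I1)" using O2 all[OF negnz[OF b(2)]] by blast
    moreover have "pl (ng b) I1 = aa" using b(1) negp[OF b(2)] passoc pcomm Zl by metis
    moreover have "pl aa I1 = I1" using b(1) passoc pcomm magpp ea by metis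
    ultimately have "leq aa I1" by simp
    then have "I1 = aa" using l1 antisym by blast
    obtain p where p: "e p = Z" "p \<noteq> Z" using F10 by blast
    have "p = Z" using Il[of p] \<open>I1 = aa\<close> F9p[OF p(1)] by metis
    then show ?thesis using p by blast
  qed
qed

lemma closed_pl: "e x = Z \<Longrightarrow> e y = Z \<Longrightarrow> e (pl x y) = Z" using A4 by metis
lemma closed_ti: assumes "e x = Z" "e y = Z" shows "e (ti x y) = Z"
  using AM2[of x y] assms F8 Zl by metis

lemma distr: assumes "e x = Z" "e y = Z" "e z = Z"
  shows "ti x (pl y z) = pl (ti x y) (ti x z)"
  using AM4[of x y z] assms F8 Zr by metis

lemma uZ: "un Z = Z"
  unfolding sunit_def
proof (rule the_equality)
  show "ti Z Z = Z \<and> (\<forall>v. ti Z v = Z \<longrightarrow> ti Z v = Z)" using Z0 by blast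
next
  fix w assume "ti Z w = Z \<and> (\<forall>v. ti Z v = Z \<longrightarrow> ti w v = w)"
  then show "w = Z" using Z0 tcomm by metis
qed

lemma un1: "x \<noteq> e x \<Longrightarrow> ti x (un x) = x"
  using theI'[OF M2] unfolding sunit_def by blast

lemma nozd: assumes "e p = Z" "e q = Z" "p \<noteq> Z" "q \<noteq> Z" "ti p q = Z" shows False
proof -
  have "un (ti p q) = un p \<or> un (ti p q) = un q" using M4 assms by metis
  then have "un p = Z \<or> un q = Z" using uZ assms(5) by metis
  then show False using un1[of p] un1[of q] assms F8 tcomm by metis
qed

lemma inv_ex: assumes "e p = Z" "p \<noteq> Z" shows "\<exists>r. e r = Z \<and> ti p r = I1"
proof -
  have pn: "p \<noteq> e p" using assms by simp
  define U where "U = un p"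
  define d where "d = iv p"
  have md: "ti p d = U" using theI'[OF M3[OF pn]] unfolding sinv_def d_def U_def by blast
  have eU: "e U = ti Z d" using AM3[OF pn] assms unfolding U_def d_def by simp
  have pU: "ti p U = p" using un1[OF pn] unfolding U_def .
  have "e (ti p U) = pl (ti (e p) U) (ti (e U) p)" by (rule AM2)
  then have "pl (ti Z U) (ti (e U) p) = Z" using pU assms by simp
  moreover have "e (ti Z U) = ti Z U" using am1[of Z U] eZ by simp
  moreover have "e (ti (e U) p) = ti (e U) p" using am1[of U p] .
  ultimately have "ti (e U) p = Z" using sum0 by blast
  moreover have "ti (e U) p = e U"
  proof -
    have "ti (e U) p = ti p (ti Z d)" using eU tcomm by simp
    also have "\<dots> = ti (ti p Z) d" using tassoc by simp
    also have "ti p Z = Z" using F8[OF assms(1)] tcomm by simp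
    finally show ?thesis using eU by simp
  qed
  ultimately have UZ: "e U = Z" by simp
  have nI: "e (ng I1) = Z" using neg2 F11 by simp
  have "ti p (pl U (ng I1)) = pl (ti p U) (ti p (ng I1))" using distr assms(1) UZ nI by blast
  also have "ti p (ng I1) = ng p" using AM5[of I1 p] Il tcomm by metis
  finally have "ti p (pl U (ng I1)) = Z" using pU negp assms(1) by simp
  then have "pl U (ng I1) = Z" using nozd[of p "pl U (ng I1)"] assms closed_pl[OF UZ nI] by blast
  then have UI: "U = I1"
  proof -
    assume h: "pl U (ng I1) = Z"
    have "U = pl U (pl (ng I1) I1)" using negp[OF F11] pcomm Zr by simp
    also have "\<dots> = pl (pl U (ng I1)) I1" using passoc by simp
    finally show ?thesis using h Zl by simp
  qed
  obtain r where r: "d = pl r (e d)" "e r = Z" using E5 by blast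
  have "e (ti p d) = pl (ti (e p) d) (ti (e d) p)" by (rule AM2)
  then have "pl (ti Z d) (ti (e d) p) = Z" using md UI F11 assms by simp
  moreover have "e (ti Z d) = ti Z d" using am1[of Z d] eZ by simp
  moreover have "e (ti (e d) p) = ti (e d) p" using am1[of d p] .
  ultimately have dp: "ti (e d) p = Z" using sum0 by blast
  have "pl (ti p r) (ti p (e d)) = pl (pl (ti p (pl r (e d))) (ti (e p) r)) (ti (e p) (e d))" by (rule AM4)
  moreover have "ti p (pl r (e d)) = I1" using r md UI by simp
  moreover have "ti p (e d) = Z" using dp tcomm by simp
  moreover have "ti (e p) r = Z" using assms(1) F8 r(2) by simp
  ultimately have "ti p r = pl I1 (ti Z (e d))" using Zr assms(1) by simp
  moreover have "e (ti p r) = Z" using closed_ti assms r by blast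
  moreover have "e (pl I1 (ti Z (e d))) = ti Z (e d)" using pm F11 am1[of Z "e d"] eZ by metis
  ultimately have "ti p r = I1" using Zr by metis
  then show ?thesis using r by blast
qed

lemma IZ: "I1 \<noteq> Z"
proof
  assume "I1 = Z"
  obtain p where p: "e p = Z" "p \<noteq> Z" using F10 by blast
  then show False using Il[of p] F8[OF p(1)] \<open>I1 = Z\<close> by metis
qed

lemma pos_ti: assumes "e x = Z" "e y = Z" "leq Z x" "leq Z y" shows "leq Z (ti x y)"
proof (cases "x = Z")
  case True then show ?thesis using F8 assms refl by metis
next
  case False
  have "leq (ti x Z) (ti x y)" by (rule O4, simp_all add: assms False[symmetric])
  then show ?thesis using F8 assms tcomm by metis
qed

lemma main: "ordered_field_on {x. e x = Z} pl ti leq Z I1"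
proof -
  let ?R = "\<lparr>carrier = {x. e x = Z}, mult = ti, one = I1, zero = Z, add = pl\<rparr>"
  have ag: "abelian_group ?R"
  proof (rule abelian_groupI)
    show "\<And>x. x \<in> carrier ?R \<Longrightarrow> \<exists>y\<in>carrier ?R. y \<oplus>\<^bsub>?R\<^esub> x = \<zero>\<^bsub>?R\<^esub>"
    proof -
      fix x assume "x \<in> carrier ?R"
      then have "e x = Z" by simp
      then have "ng x \<in> carrier ?R \<and> pl (ng x) x = Z" using negp negnz pcomm by simp
      then show "\<exists>y\<in>carrier ?R. y \<oplus>\<^bsub>?R\<^esub> x = \<zero>\<^bsub>?R\<^esub>" by auto
    qed
  qed (auto simp: closed_pl eZ Zl passoc intro: pcomm)
  have cm: "comm_monoid ?R"
    by (rule comm_monoidI) (auto simp: closed_ti F11 tassoc Il intro: tcomm)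
  have cr: "cring ?R"
  proof (rule cringI[OF ag cm])
    fix x y z assume "x \<in> carrier ?R" "y \<in> carrier ?R" "z \<in> carrier ?R"
    then have "e x = Z" "e y = Z" "e z = Z" by simp_all
    then have "ti z (pl x y) = pl (ti z x) (ti z y)" by (rule_tac distr) simp_all
    then show "(x \<oplus>\<^bsub>?R\<^esub> y) \<otimes>\<^bsub>?R\<^esub> z = x \<otimes>\<^bsub>?R\<^esub> z \<oplus>\<^bsub>?R\<^esub> y \<otimes>\<^bsub>?R\<^esub> z"
      using tcomm by simp
  qed
  have "field ?R"
  proof (rule cring.cring_fieldI2[OF cr])
    show "\<zero>\<^bsub>?R\<^esub> \<noteq> \<one>\<^bsub>?R\<^esub>" using IZ by simp
  next
    fix a assume "a \<in> carrier ?R" "a \<noteq> \<zero>\<^bsub>?R\<^esub>"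
    then have "e a = Z" "a \<noteq> Z" by simp_all
    then obtain r where "e r = Z" "ti a r = I1" using inv_ex by blast
    then show "\<exists>b\<in>carrier ?R. a \<otimes>\<^bsub>?R\<^esub> b = \<one>\<^bsub>?R\<^esub>" by auto
  qed
  moreover have "\<forall>x\<in>{x. e x = Z}. \<forall>y\<in>{x. e x = Z}. leq Z x \<and> leq Z y \<longrightarrow> leq Z (ti x y)"
    using pos_ti by blast
  moreover have "\<forall>x\<in>{x. e x = Z}. leq x x" using refl by blast
  moreover have "\<forall>x\<in>{x. e x = Z}. \<forall>y\<in>{x. e x = Z}. leq x y \<and> leq y x \<longrightarrow> x = y"
    using antisym by blast
  moreover have "\<forall>x\<in>{x. e x = Z}. \<forall>y\<in>{x. e x = Z}. \<forall>w\<in>{x. e x = Z}. leq x y \<and> leq y w \<longrightarrow> leq x w"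
    by (meson trans)
  moreover have "\<forall>x\<in>{x. e x = Z}. \<forall>y\<in>{x. e x = Z}. leq x y \<or> leq y x" using total by blast
  moreover have "\<forall>x\<in>{x. e x = Z}. \<forall>y\<in>{x. e x = Z}. \<forall>w\<in>{x. e x = Z}. leq x y \<longrightarrow> leq (pl x w) (pl y w)"
    using O2 by blast
  ultimately show ?thesis unfolding ordered_field_on_def by (intro conjI)
qed
end

theorem mainTheorem16:
  fixes pl ti :: "'a \<Rightarrow> 'a \<Rightarrow> 'a" and leq :: "'a \<Rightarrow> 'a \<Rightarrow> bool"
  assumes "solid pl ti leq"
  shows "ordered_field_on {x. mag pl x = szero pl} pl ti leq (szero pl) (sone ti)"
  using sol.main[OF sol.intro[OF assms]] .

end
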